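(* If $n$ is divisible by $8$, then $\hat r_n\le\frac85$.
   Context: Equal responsibilities; chores $e_1,e_2,\ldots,e_m$. A picking order $S\in[n]^m$ allocates $A_i(S)=\{e_r:S_r=i\}$ to agent $i$. For additive $c_i\ge0$ with $c_i(e_1)\ge c_i(e_2)\ge\cdots$, $CS_i=\max\{\frac1nc_i(\{e_1,\ldots,e_m\}),c_i(e_1),c_i(e_n)+c_i(e_{n+1})\}$ (zeros beyond $m$). $r_{n,m}(S)=\sup_i\sup_{c_i}c_i(A_i(S))/CS_i$. A ridge picking order has $m\ge2n$, $S_r=r$ and $S_{n+r}=n-r+1$ for $1\le r\le n$. $\hat r_{n,m}=\min\{r_{n,m}(S):S\text{ ridge of length }m\}$, $\hat r_n=\sup_{m\ge 2n}\hat r_{n,m}$. *)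

theory Defs
  imports "HOL-Library.Extended_Real"
begin

(* Chores are indexed 1..m, agents 1..n. A picking order of length m is a
  function S with S r \<in> {1..n} for r \<in> {1..m} (extensional: 0 elsewhere). *)

definition picking_orders :: "nat \<Rightarrow> nat \<Rightarrow> (nat \<Rightarrow> nat) set" where
  "picking_orders n m = {S. (\<forall>r\<in>{1..m}. S r \<in> {1..n}) \<and> (\<forall>r. r \<notin> {1..m} \<longrightarrow> S r = 0)}"

definition alloc :: "nat \<Rightarrow> (nat \<Rightarrow> nat) \<Rightarrow> nat \<Rightarrow> nat set" where
  "alloc m S i = {r \<in> {1..m}. S r = i}"

definition costs :: "nat \<Rightarrow> (nat \<Rightarrow> real) set" where
  "costs m = {c. (\<forall>r\<in>{1..m}. 0 \<le> c r) \<and> (\<forall>r\<in>{1..m}. \<forall>s\<in>{1..m}. r \<le> s \<longrightarrow> c s \<le> c r)}"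

definition cz :: "nat \<Rightarrow> (nat \<Rightarrow> real) \<Rightarrow> nat \<Rightarrow> real" where
  "cz m c r = (if 1 \<le> r \<and> r \<le> m then c r else 0)"

definition CS :: "nat \<Rightarrow> nat \<Rightarrow> (nat \<Rightarrow> real) \<Rightarrow> real" where
  "CS n m c = max ((\<Sum>r\<in>{1..m}. c r) / real n) (max (cz m c 1) (cz m c n + cz m c (n + 1)))"

definition ratio :: "nat \<Rightarrow> nat \<Rightarrow> (nat \<Rightarrow> nat) \<Rightarrow> ereal" where
  "ratio n m S = (SUP i\<in>{1..n}. SUP c\<in>costs m.
      ereal ((\<Sum>r\<in>alloc m S i. c r) / CS n m c))"

definition ridge :: "nat \<Rightarrow> nat \<Rightarrow> (nat \<Rightarrow> nat) set" where
  "ridge n m = {S \<in> picking_orders n m. 2 * n \<le> m \<and>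
      (\<forall>r\<in>{1..n}. S r = r \<and> S (n + r) = n - r + 1)}"

definition rhat_nm :: "nat \<Rightarrow> nat \<Rightarrow> ereal" where
  "rhat_nm n m = (INF S\<in>ridge n m. ratio n m S)"

definition rhat :: "nat \<Rightarrow> ereal" where
  "rhat n = (SUP m\<in>{2 * n..}. rhat_nm n m)"

end

theory Submission
  imports Defs
begin

definition patl :: "nat list" where
 "patl = [6, 7, 8, 5, 4, 6, 7, 3, 8, 5, 2, 6, 1, 7, 4, 8, 6, 5, 3, 7, 6, 8, 2, 4, 5, 7, 1, 6, 3, 8, 5, 7, 4, 6, 2, 8, 6, 5, 3, 1]"
definition pat :: "nat \<Rightarrow> nat" where "pat s = patl ! (s mod 40)"
definition Al :: "nat list" where "Al = [40,35,10,25,20,5,35,20]"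
definition Bl :: "nat list" where "Bl = [3,3,1,3,3,1,6,3]"
definition Cl :: "nat list" where "Cl = [8,10,4,14,16,6,42,24]"
definition cnt :: "nat \<Rightarrow> nat \<Rightarrow> nat" where
 "cnt g j = length (filter (\<lambda>s. pat s = g) [0..<j])"

lemma table2: "list_all (\<lambda>g. list_all (\<lambda>s. Al!(g-1) * length (filter (\<lambda>x. x = g) (take (Suc s) patl)) \<le> Bl!(g-1)*s + Cl!(g-1)) [0..<40]) [1..<9]"
  by (simp add: patl_def Al_def Bl_def Cl_def upt_rec)

lemma period2: "list_all (\<lambda>g. Al!(g-1) * length (filter (\<lambda>x. x = g) patl) \<le> 40 * Bl!(g-1)) [1..<9]"
  by (simp add: patl_def Al_def Bl_def Cl_def upt_rec)

lemma len_patl: "length patl = 40" by (simp add: patl_def)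

lemma cnt_take: assumes "j \<le> 40" shows "cnt g j = length (filter (\<lambda>x. x = g) (take j patl))"
proof -
  have tk: "take j patl = map (\<lambda>s. patl ! s) [0..<j]"
    by (rule nth_equalityI) (use assms len_patl in auto)
  have "filter (\<lambda>s. pat s = g) [0..<j] = filter (\<lambda>s. patl ! s = g) [0..<j]"
    by (rule filter_cong) (use assms in \<open>auto simp: pat_def\<close>)
  then show ?thesis unfolding cnt_def tk by (simp add: filter_map o_def)
qed

lemma table: "g \<in> {1..8} \<Longrightarrow> s < 40 \<Longrightarrow> Al!(g-1) * cnt g (Suc s) \<le> Bl!(g-1)*s + Cl!(g-1)"
proof -
  assume a: "g \<in> {1..8}" "s < 40"
  from table2 have *: "\<forall>g\<in>{1..<9}. \<forall>s\<in>{0..<40}. Al!(g-1) * length (filter (\<lambda>x. x = g) (take (Suc s) patl)) \<le> Bl!(g-1)*s + Cl!(g-1)"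
    by (simp only: list_all_iff set_upt)
  have g: "g \<in> {1..<9}" and s: "s \<in> {0..<40}" using a by auto
  have "cnt g (Suc s) = length (filter (\<lambda>x. x = g) (take (Suc s) patl))" using a by (intro cnt_take) simp
  then show ?thesis using bspec[OF bspec[OF * g] s] by simp
qed

lemma period: "g \<in> {1..8} \<Longrightarrow> Al!(g-1) * cnt g 40 \<le> 40 * Bl!(g-1)"
proof -
  assume a: "g \<in> {1..8}"
  from period2 have *: "\<forall>g\<in>{1..<9}. Al!(g-1) * length (filter (\<lambda>x. x = g) patl) \<le> 40 * Bl!(g-1)"
    by (simp only: list_all_iff set_upt)
  have g: "g \<in> {1..<9}" using a by auto
  have "cnt g 40 = length (filter (\<lambda>x. x = g) patl)" using cnt_take[of 40 g] len_patl by simp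
  then show ?thesis using bspec[OF * g] by simp
qed

lemma filter_upt_add: "length (filter P [0..<a + j]) = length (filter P [0..<a]) + length (filter (\<lambda>x. P (x + a)) [0..<j])"
proof -
  have 1: "[0..<a + j] = [0..<a] @ [a..<a + j]" by (rule upt_add_eq_append) simp
  have 2: "map (\<lambda>x. x + a) [0..<j] = [a..<j + a]" by (rule map_add_upt)
  have 3: "j + a = a + j" by (rule add.commute)
  have "[0..<a + j] = [0..<a] @ map (\<lambda>x. x + a) [0..<j]" unfolding 1 2 3 ..
  then show ?thesis by (simp add: filter_map o_def)
qed

lemma cnt_add: "cnt g (40 + j) = cnt g 40 + cnt g j"
proof -
  have per: "(\<lambda>x. pat (x + 40) = g) = (\<lambda>x. pat x = g)" by (simp add: pat_def)
  show ?thesis unfolding cnt_def filter_upt_add[of _ 40 j] per ..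
qed

lemma cnt_bound: "g \<in> {1..8} \<Longrightarrow> Al!(g-1) * cnt g (Suc s) \<le> Bl!(g-1)*s + Cl!(g-1)"
proof (induction s rule: less_induct)
  case (less s)
  show ?case
  proof (cases "s < 40")
    case True then show ?thesis using table less.prems by blast
  next
    case False
    then obtain s' where s': "s = 40 + s'" by (metis le_Suc_ex not_less)
    have ih: "Al!(g-1) * cnt g (Suc s') \<le> Bl!(g-1)*s' + Cl!(g-1)"
      using less s' by simp
    have "cnt g (Suc s) = cnt g 40 + cnt g (Suc s')"
      using cnt_add[of g "Suc s'"] s' by simp
    then have "Al!(g-1) * cnt g (Suc s) = Al!(g-1) * cnt g 40 + Al!(g-1) * cnt g (Suc s')"
      by (simp add: algebra_simps)
    also have "\<dots> \<le> 40 * Bl!(g-1) + (Bl!(g-1)*s' + Cl!(g-1))"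
      using period[OF less.prems] ih by linarith
    also have "\<dots> = Bl!(g-1)*s + Cl!(g-1)" using s' by (simp add: algebra_simps)
    finally show ?thesis .
  qed
qed

lemma cnt_card: "cnt g j = card {s. s < j \<and> pat s = g}"
proof -
  have "card (set (filter (\<lambda>s. pat s = g) [0..<j])) = length (filter (\<lambda>s. pat s = g) [0..<j])"
    by (intro distinct_card) simp
  moreover have "set (filter (\<lambda>s. pat s = g) [0..<j]) = {s. s < j \<and> pat s = g}" by auto
  ultimately show ?thesis by (simp add: cnt_def)
qed

lemma pat_range: "1 \<le> pat s \<and> pat s \<le> 8"
proof -
  have "pat s \<in> set patl" unfolding pat_def by (rule nth_mem) (simp add: patl_def)
  then show ?thesis by (auto simp: patl_def)
qed

lemma divmod_uniq:
  fixes a b c d h :: nat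
  assumes "b < h" "d < h" "a*h + b = c*h + d"
  shows "a = c \<and> b = d"
proof -
  have "(a*h + b) div h = a" using assms(1) by simp
  moreover have "(c*h + d) div h = c" using assms(2) by simp
  moreover have "(a*h + b) mod h = b" using assms(1) by simp
  moreover have "(c*h + d) mod h = d" using assms(2) by simp
  ultimately show ?thesis using assms(3) by metis
qed

definition sched :: "nat \<Rightarrow> nat \<Rightarrow> nat \<Rightarrow> nat" where
 "sched n m r = (if 1 \<le> r \<and> r \<le> n then r else if n < r \<and> r \<le> 2*n then 2*n+1-r
    else if 2*n < r \<and> r \<le> m then
      (pat ((r - 2*n - 1) div (n div 8)) - 1) * (n div 8) + (r - 2*n - 1) mod (n div 8) + 1
    else 0)"

lemma sched_ridge:
  assumes "0 < n" "8 dvd n" "2*n \<le> m"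
  shows "sched n m \<in> ridge n m"
proof -
  define h where "h = n div 8"
  have n: "n = 8*h" and h: "0 < h" using assms unfolding h_def by auto
  have tail: "(pat ((r - 2*n - 1) div h) - 1) * h + (r - 2*n - 1) mod h + 1 \<in> {1..n}" for r
  proof -
    have "pat ((r - 2*n - 1) div h) - 1 \<le> 7" using pat_range[of "(r - 2*n - 1) div h"] by linarith
    then have a: "(pat ((r - 2*n - 1) div h) - 1) * h \<le> 7 * h" by (rule mult_le_mono1)
    have b: "(r - 2*n - 1) mod h < h" using h by simp
    show ?thesis using n a b by (simp only: atLeastAtMost_iff) linarith
  qed
  have A: "sched n m r \<in> {1..n}" if r: "r \<in> {1..m}" for r
  proof (cases "r \<le> 2*n")
    case True then show ?thesis using r by (auto simp: sched_def)
  next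
    case False
    then have "sched n m r = (pat ((r - 2*n - 1) div h) - 1) * h + (r - 2*n - 1) mod h + 1"
      using r by (simp add: sched_def h_def)
    then show ?thesis using tail[of r] by simp
  qed
  have B: "sched n m r = 0" if r: "r \<notin> {1..m}" for r
    using r assms(3) by (auto simp: sched_def)
  have C: "sched n m r = r \<and> sched n m (n + r) = n - r + 1" if r: "r \<in> {1..n}" for r
    using r by (auto simp: sched_def)
  have P: "sched n m \<in> picking_orders n m"
    unfolding picking_orders_def mem_Collect_eq
  proof (intro conjI ballI allI impI)
    fix r assume "r \<in> {1..m}" then show "sched n m r \<in> {1..n}" by (rule A)
  next
    fix r assume "r \<notin> {1..m}" then show "sched n m r = 0" by (rule B)
  qed
  show ?thesis
    unfolding ridge_def mem_Collect_eq
  proof (intro conjI ballI P assms(3))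
    fix r assume "r \<in> {1..n}"
    then show "sched n m r = r" "sched n m (n + r) = n - r + 1" using C by auto
  qed
qed

lemma ridge_count:
  assumes i: "i \<in> {1..n}" and k: "k \<le> 2*n" and m: "2*n \<le> m"
  shows "card {r\<in>{1..k}. sched n m r = i} \<le> (if i \<le> k then 1 else 0) + (if 2*n+1-i \<le> k then 1 else 0)"
proof -
  let ?A = "(if i \<le> k then {i} else {})"
  let ?B = "(if 2*n+1-i \<le> k then {2*n+1-i} else {})"
  have sub: "{r\<in>{1..k}. sched n m r = i} \<subseteq> ?A \<union> ?B"
  proof
    fix r assume r: "r \<in> {r\<in>{1..k}. sched n m r = i}"
    then have r1: "1 \<le> r" "r \<le> k" "sched n m r = i" by auto
    show "r \<in> ?A \<union> ?B"
    proof (cases "r \<le> n")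
      case True then have "r = i" using r1 by (simp add: sched_def)
      then show ?thesis using r1 by simp
    next
      case False then have "sched n m r = 2*n+1-r" using r1 k by (simp add: sched_def)
      then have "r = 2*n+1-i" using r1 k False by simp
      then show ?thesis using r1 by simp
    qed
  qed
  have "card {r\<in>{1..k}. sched n m r = i} \<le> card (?A \<union> ?B)" by (rule card_mono[OF _ sub]) simp
  also have "\<dots> \<le> card ?A + card ?B" by (rule card_Un_le)
  also have "\<dots> = (if i \<le> k then 1 else 0) + (if 2*n+1-i \<le> k then 1 else 0)" by simp
  finally show ?thesis .
qed

lemma tail_count:
  assumes n: "n = 8*h" and h: "0 < h" and i: "i \<in> {1..n}" and k: "2*n < k" "k \<le> m"
  shows "card {r\<in>{1..k}. sched n m r = i} \<le> 2 + cnt ((i-1) div h + 1) (Suc ((k-2*n-1) div h))"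
proof -
  define g where "g = (i-1) div h + 1"
  define \<mu> where "\<mu> = (i-1) mod h"
  define s0 where "s0 = (k-2*n-1) div h"
  have hn: "n div 8 = h" using n by simp
  have ieq: "i - 1 = (g-1)*h + \<mu>" unfolding g_def \<mu>_def by simp
  have mu: "\<mu> < h" unfolding \<mu>_def using h by simp
  have g1: "1 \<le> g" unfolding g_def by simp
  have split: "{r\<in>{1..k}. sched n m r = i} = {r\<in>{1..2*n}. sched n m r = i} \<union> {r\<in>{2*n+1..k}. sched n m r = i}"
    using k by auto
  have "card {r\<in>{1..2*n}. sched n m r = i} \<le> (if i \<le> 2*n then 1 else 0) + (if 2*n+1-i \<le> 2*n then 1 else 0)"
    using ridge_count[OF i, of "2*n" m] k by simp
  moreover have "(if i \<le> 2*n then 1 else 0) + (if 2*n+1-i \<le> 2*n then 1 else 0) \<le> (2::nat)" by simp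
  ultimately have c1: "card {r\<in>{1..2*n}. sched n m r = i} \<le> 2" by linarith
  have key: "pat ((r-2*n-1) div h) = g \<and> (r-2*n-1) mod h = \<mu>"
    if r: "r \<in> {2*n+1..k}" "sched n m r = i" for r
  proof -
    have "sched n m r = (pat ((r-2*n-1) div h) - 1) * h + (r-2*n-1) mod h + 1"
      using r k by (simp add: sched_def hn)
    then have "(pat ((r-2*n-1) div h) - 1) * h + (r-2*n-1) mod h = (g-1)*h + \<mu>"
      using r(2) ieq by simp
    then have "pat ((r-2*n-1) div h) - 1 = g - 1 \<and> (r-2*n-1) mod h = \<mu>"
      by (rule divmod_uniq[OF mod_less_divisor[OF h] mu])
    then have A: "pat ((r-2*n-1) div h) - 1 = g - 1" and B: "(r-2*n-1) mod h = \<mu>" by auto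
    have "pat ((r-2*n-1) div h) = g" using A pat_range[of "(r-2*n-1) div h"] g1 by arith
    then show ?thesis using B by simp
  qed
  have c2: "card {r\<in>{2*n+1..k}. sched n m r = i} \<le> cnt g (Suc s0)"
    unfolding cnt_card
  proof (rule card_inj_on_le[where f = "\<lambda>r. (r-2*n-1) div h"])
    show "inj_on (\<lambda>r. (r-2*n-1) div h) {r\<in>{2*n+1..k}. sched n m r = i}"
    proof (rule inj_onI)
      fix r1 r2
      assume r1: "r1 \<in> {r\<in>{2*n+1..k}. sched n m r = i}" and r2: "r2 \<in> {r\<in>{2*n+1..k}. sched n m r = i}"
        and eq: "(r1-2*n-1) div h = (r2-2*n-1) div h"
      have m1: "(r1-2*n-1) mod h = \<mu>" using key r1 by auto
      have m2: "(r2-2*n-1) mod h = \<mu>" using key r2 by auto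
      have "r1-2*n-1 = r2-2*n-1"
        by (metis div_mult_mod_eq eq m1 m2)
      then show "r1 = r2" using r1 r2 by auto
    qed
    show "(\<lambda>r. (r-2*n-1) div h) ` {r\<in>{2*n+1..k}. sched n m r = i} \<subseteq> {s. s < Suc s0 \<and> pat s = g}"
    proof
      fix s assume "s \<in> (\<lambda>r. (r-2*n-1) div h) ` {r\<in>{2*n+1..k}. sched n m r = i}"
      then obtain r where r: "r \<in> {r\<in>{2*n+1..k}. sched n m r = i}" and s: "s = (r-2*n-1) div h" by auto
      have "s \<le> s0" unfolding s s0_def using r by (intro div_le_mono) auto
      moreover have "pat s = g" using key r s by auto
      ultimately show "s \<in> {s. s < Suc s0 \<and> pat s = g}" by simp
    qed
    show "finite {s. s < Suc s0 \<and> pat s = g}" by simp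
  qed
  have "card {r\<in>{1..k}. sched n m r = i} \<le> card {r\<in>{1..2*n}. sched n m r = i} + card {r\<in>{2*n+1..k}. sched n m r = i}"
    unfolding split by (rule card_Un_le)
  then show ?thesis using c1 c2 unfolding g_def s0_def by linarith
qed

definition F :: "real \<Rightarrow> real \<Rightarrow> real \<Rightarrow> nat \<Rightarrow> nat \<Rightarrow> real" where
 "F \<alpha> \<beta> \<gamma> n k = 8/5 * (\<alpha> * (real k / real n) + \<beta> + \<gamma> * ((if n \<le> k then 1 else 0) + (if n+1 \<le> k then 1 else 0)))"

lemma cert:
  fixes \<alpha> \<beta> \<gamma> :: real and A B C h n m i k :: nat and N :: "nat \<Rightarrow> nat"
  assumes n: "n = 8*h" "0 < h" and i: "i \<in> {1..n}" and m: "2*n \<le> m"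
   and pos: "0 \<le> \<alpha>" "0 \<le> \<beta>" "0 \<le> \<gamma>" "\<alpha>+\<beta>+\<gamma> = 1"
   and R1: "i < n \<Longrightarrow> 1 \<le> 8/5 * (\<alpha> * (real i / real n) + \<beta>)"
   and R2: "2 \<le> 8/5 * (\<alpha> * (2 - real i / real n) + \<beta> + 2*\<gamma>)"
   and T1: "\<alpha> * real A = 5 * real B" "0 < A"
   and T2: "real C + 2 * real A \<le> real A * (8/5) * (2*\<alpha> + \<beta> + 2*\<gamma>)"
   and Nr: "\<And>k. k \<le> 2*n \<Longrightarrow> N k \<le> (if i \<le> k then 1 else 0) + (if 2*n+1-i \<le> k then 1 else 0)"
   and Nt: "\<And>k. 2*n < k \<Longrightarrow> k \<le> m \<Longrightarrow> \<exists>t. N k \<le> 2 + t \<and> A * t \<le> B * ((k-2*n-1) div h) + C"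
   and k: "k \<in> {1..m}"
  shows "real (N k) \<le> F \<alpha> \<beta> \<gamma> n k"
proof -
  have npos: "0 < real n" using n by simp
  define x where "x = real i / real n"
  define y where "y = real k / real n"
  have ky: "real k = y * real n" unfolding y_def using npos by simp
  have ix: "real i = x * real n" unfolding x_def using npos by simp
  have y0: "0 \<le> y" unfolding y_def by simp
  have in_: "i \<le> n" "1 \<le> i" using i by auto
  show ?thesis
  proof (cases "k \<le> 2*n")
    case True
    note Nk = Nr[OF True]
    show ?thesis
    proof (cases "k < i")
      case True
      then have "k < 2*n+1-i" using in_ by linarith
      then have "N k = 0" using Nk \<open>k < i\<close> by simp
      moreover have "0 \<le> F \<alpha> \<beta> \<gamma> n k" unfolding F_def using pos y0 by (simp add: y_def[symmetric])
      ultimately show ?thesis by simp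
    next
      case ki: False
      show ?thesis
      proof (cases "k < 2*n+1-i")
        case True
        then have N1: "N k \<le> 1" using Nk ki by simp
        show ?thesis
        proof (cases "n \<le> k")
          case True
          then have "1 \<le> y" using ky npos by (simp add: y_def)
          then have "\<alpha> \<le> \<alpha> * y" using pos(1) by (simp add: mult_le_cancel_left1)
          then have "8/5 \<le> F \<alpha> \<beta> \<gamma> n k" unfolding F_def y_def[symmetric] using True pos by auto
          then show ?thesis using N1 by linarith
        next
          case False
          then have "i < n" using ki by simp
          have "x \<le> y" unfolding x_def y_def using ki npos by (simp add: divide_right_mono)
          then have "\<alpha> * x \<le> \<alpha> * y" using pos(1) by (rule mult_left_mono)
          then have "1 \<le> F \<alpha> \<beta> \<gamma> n k" unfolding F_def y_def[symmetric] using False R1[OF \<open>i < n\<close>]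
            by (simp add: x_def[symmetric])
          then show ?thesis using N1 by linarith
        qed
      next
        case False
        then have N2: "N k \<le> 2" using Nk by (simp split: if_splits)
        have kn: "n + 1 \<le> k" using False in_ by simp
        have "real (2*n) \<le> real k + real i" using False by simp
        then have "2 * real n \<le> y * real n + x * real n" using ky ix by simp
        then have "2 \<le> y + x" using npos by (simp add: distrib_right[symmetric])
        then have "2 - x \<le> y" by simp
        then have "\<alpha> * (2 - x) \<le> \<alpha> * y" using pos(1) by (rule mult_left_mono)
        then have "2 \<le> F \<alpha> \<beta> \<gamma> n k" unfolding F_def y_def[symmetric] using kn R2
          by (simp add: x_def[symmetric])
        then show ?thesis using N2 by linarith
      qed
    qed
  next
    case False
    then have k2: "2*n < k" by simp
    obtain t where t: "N k \<le> 2 + t" "A * t \<le> B * ((k-2*n-1) div h) + C" using Nt[OF k2] k by auto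
    define s0 where "s0 = (k-2*n-1) div h"
    have "s0 * h \<le> k - 2*n - 1" unfolding s0_def by (rule div_times_less_eq_dividend)
    then have "s0 * h + 2*n + 1 \<le> k" using k2 by linarith
    then have "real (s0 * h + 2*n + 1) \<le> real k" by (simp only: of_nat_le_iff)
    then have "real s0 * real h \<le> real k - 2 * real n" by simp
    then have "real s0 * real h \<le> (y - 2) * (8 * real h)" using ky n by (simp add: algebra_simps)
    then have s0y: "real s0 \<le> 8 * (y - 2)" using n by (simp add: mult.commute mult.left_commute)
    have At: "real A * real t \<le> real B * real s0 + real C" using t(2) unfolding s0_def
      by (metis of_nat_add of_nat_le_iff of_nat_mult)
    have "real B * real s0 \<le> real B * (8 * (y - 2))" using s0y by (simp add: mult_left_mono)
    have FA: "real A * F \<alpha> \<beta> \<gamma> n k = 8/5 * (\<alpha> * real A) * (y - 2) + real A * (8/5) * (2*\<alpha> + \<beta> + 2*\<gamma>)"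
      unfolding F_def y_def[symmetric] using k2 by (simp add: field_simps)
    also have "\<dots> = 8 * real B * (y - 2) + real A * (8/5) * (2*\<alpha> + \<beta> + 2*\<gamma>)" using T1 by simp
    finally have E: "real A * F \<alpha> \<beta> \<gamma> n k = 8 * real B * (y - 2) + real A * (8/5) * (2*\<alpha> + \<beta> + 2*\<gamma>)" .
    have "real A * (2 + real t) = 2*real A + real A * real t" by (simp add: algebra_simps)
    also have "\<dots> \<le> 2*real A + real B * real s0 + real C" using At by linarith
    also have "\<dots> \<le> real A * (8/5) * (2*\<alpha> + \<beta> + 2*\<gamma>) + real B * (8 * (y - 2))"
      using T2 \<open>real B * real s0 \<le> real B * (8 * (y - 2))\<close> by linarith
    also have "\<dots> = real A * F \<alpha> \<beta> \<gamma> n k" unfolding E by (simp add: algebra_simps)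
    finally have "real A * (2 + real t) \<le> real A * F \<alpha> \<beta> \<gamma> n k" .
    then have "2 + real t \<le> F \<alpha> \<beta> \<gamma> n k" using T1(2) by simp
    then show ?thesis using t(1) by linarith
  qed
qed

lemma abel:
  fixes c u v :: "nat \<Rightarrow> real"
  assumes mono: "\<forall>r\<in>{1..m}. \<forall>s\<in>{1..m}. r \<le> s \<longrightarrow> c s \<le> c r" and nn: "\<forall>r\<in>{1..m}. 0 \<le> c r"
   and pre: "\<And>k. k \<le> m \<Longrightarrow> (\<Sum>r\<in>{1..k}. u r) \<le> (\<Sum>r\<in>{1..k}. v r)"
  shows "(\<Sum>r\<in>{1..m}. c r * u r) \<le> (\<Sum>r\<in>{1..m}. c r * v r)"
proof -
  define w where "w r = v r - u r" for r
  define W where "W k = (\<Sum>r\<in>{1..k}. w r)" for k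
  have W0: "0 \<le> W k" if "k \<le> m" for k using pre[OF that] by (simp add: W_def w_def sum_subtractf)
  have claim: "j \<le> m \<Longrightarrow> c j * W j \<le> (\<Sum>r\<in>{1..j}. c r * w r)" for j
  proof (induction j)
    case 0 then show ?case by (simp add: W_def)
  next
    case (Suc j)
    have IH: "c j * W j \<le> (\<Sum>r\<in>{1..j}. c r * w r)" using Suc by simp
    have A: "c (Suc j) * W j \<le> c j * W j"
    proof (cases "j = 0")
      case True then show ?thesis by (simp add: W_def)
    next
      case False
      then have "c (Suc j) \<le> c j" using mono Suc.prems by auto
      moreover have "0 \<le> W j" using W0 Suc.prems by simp
      ultimately show ?thesis by (simp add: mult_right_mono)
    qed
    have B: "W (Suc j) = W j + w (Suc j)" by (simp add: W_def)
    have C: "(\<Sum>r\<in>{1..Suc j}. c r * w r) = (\<Sum>r\<in>{1..j}. c r * w r) + c (Suc j) * w (Suc j)" by simp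
    show ?case unfolding B C using IH A by (simp add: algebra_simps)
  qed
  have "0 \<le> c m * W m"
  proof (cases "m = 0")
    case True then show ?thesis by (simp add: W_def)
  next
    case False then show ?thesis using nn W0[of m] by simp
  qed
  then have "0 \<le> (\<Sum>r\<in>{1..m}. c r * w r)" using claim[of m] by simp
  then show ?thesis by (simp add: w_def sum_subtractf right_diff_distrib)
qed

definition vv :: "real \<Rightarrow> real \<Rightarrow> real \<Rightarrow> nat \<Rightarrow> nat \<Rightarrow> real" where
  "vv \<alpha> \<beta> \<gamma> n r = 8/5 * (\<alpha> / real n + (if r = 1 then \<beta> else 0) + (if r = n then \<gamma> else 0) + (if r = n+1 then \<gamma> else 0))"

lemma vv_sum: assumes "2 \<le> n" shows "1 \<le> k \<Longrightarrow> (\<Sum>r\<in>{1..k}. vv \<alpha> \<beta> \<gamma> n r) = F \<alpha> \<beta> \<gamma> n k"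
proof (induction k)
  case 0 then show ?case by simp
next
  case (Suc k)
  show ?case
  proof (cases "k = 0")
    case True then show ?thesis using assms by (simp add: vv_def F_def)
  next
    case False
    then have IH: "(\<Sum>r\<in>{1..k}. vv \<alpha> \<beta> \<gamma> n r) = F \<alpha> \<beta> \<gamma> n k" using Suc by simp
    have "F \<alpha> \<beta> \<gamma> n (Suc k) = F \<alpha> \<beta> \<gamma> n k + vv \<alpha> \<beta> \<gamma> n (Suc k)"
      using False assms by (simp add: vv_def F_def add_divide_distrib algebra_simps)
    then show ?thesis using IH by simp
  qed
qed

lemma vv_csum:
  fixes c :: "nat \<Rightarrow> real"
  assumes "2 \<le> n" "n + 1 \<le> m"
  shows "(\<Sum>r\<in>{1..m}. c r * vv \<alpha> \<beta> \<gamma> n r) = 8/5 * (\<alpha> * ((\<Sum>r\<in>{1..m}. c r) / real n) + \<beta> * c 1 + \<gamma> * (c n + c (n+1)))"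
proof -
  have pt: "c r * vv \<alpha> \<beta> \<gamma> n r = 8/5*(\<alpha>/real n)*c r + (if r = 1 then 8/5*\<beta>*c r else 0)
     + (if r = n then 8/5*\<gamma>*c r else 0) + (if r = n+1 then 8/5*\<gamma>*c r else 0)" for r
    by (simp add: vv_def algebra_simps)
  have "(\<Sum>r\<in>{1..m}. c r * vv \<alpha> \<beta> \<gamma> n r) = (\<Sum>r\<in>{1..m}. 8/5*(\<alpha>/real n)*c r) + (\<Sum>r\<in>{1..m}. if r = 1 then 8/5*\<beta>*c r else 0)
     + (\<Sum>r\<in>{1..m}. if r = n then 8/5*\<gamma>*c r else 0) + (\<Sum>r\<in>{1..m}. if r = n+1 then 8/5*\<gamma>*c r else 0)"
    unfolding pt by (simp add: sum.distrib)
  also have "\<dots> = 8/5*(\<alpha>/real n) * (\<Sum>r\<in>{1..m}. c r) + 8/5*\<beta>*c 1 + 8/5*\<gamma>*c n + 8/5*\<gamma>*c (n+1)"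
    using assms by (simp add: sum.delta sum_distrib_left)
  finally show ?thesis by (simp add: algebra_simps)
qed

lemma agent:
  assumes n: "n = 8*h" "0 < h" and i: "i \<in> {1..n}" and m: "2*n \<le> m"
  shows "\<exists>\<alpha> \<beta> \<gamma>. 0 \<le> \<alpha> \<and> 0 \<le> \<beta> \<and> 0 \<le> \<gamma> \<and> \<alpha>+\<beta>+\<gamma> = 1 \<and>
     (\<forall>k\<in>{1..m}. real (card {r\<in>{1..k}. sched n m r = i}) \<le> F \<alpha> \<beta> \<gamma> n k)"
proof -
  define g where "g = (i-1) div h + 1"
  define N where "N k = card {r\<in>{1..k}. sched n m r = i}" for k
  have i1: "1 \<le> i" "i \<le> n" using i by auto
  have "(i-1) div h < 8" using i1 n by (simp add: div_less_iff_less_mult)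
  then have g18: "g \<in> {1..8}" unfolding g_def by simp
  have lo: "((i-1) div h) * h \<le> i - 1" by (rule div_times_less_eq_dividend)
  have "(i-1) div h * h + (i-1) mod h = i - 1" by (rule div_mult_mod_eq)
  moreover have "(i-1) mod h < h" using n(2) by simp
  ultimately have hi: "i - 1 < ((i-1) div h + 1) * h" unfolding distrib_right mult_1_left by linarith
  have e1: "(g-1)*n = 8*((i-1) div h * h)" unfolding g_def n(1) by (simp add: ac_simps)
  have e2: "g*n = 8*(((i-1) div h + 1) * h)" unfolding g_def n(1) by (simp add: ac_simps)
  have glo: "(g-1) * n < 8 * i" unfolding e1 using lo i1 by linarith
  have ghi: "8 * i \<le> g * n" unfolding e2 using hi i1 by linarith
  have npos: "0 < real n" using n by simp
  define x where "x = real i / real n"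
  have "real ((g-1) * n) < real (8 * i)" using glo by (simp only: of_nat_less_iff)
  then have xl: "real (g-1) / 8 < x" unfolding x_def using npos by (simp add: field_simps)
  have "real (8 * i) \<le> real (g * n)" using ghi by (simp only: of_nat_le_iff)
  then have xu: "x \<le> real g / 8" unfolding x_def using npos by (simp add: field_simps)
  have Nr: "\<And>k. k \<le> 2*n \<Longrightarrow> N k \<le> (if i \<le> k then 1 else 0) + (if 2*n+1-i \<le> k then 1 else 0)"
    unfolding N_def using ridge_count[OF i _ m] by blast
  have Nt: "\<And>k. 2*n < k \<Longrightarrow> k \<le> m \<Longrightarrow> \<exists>t. N k \<le> 2 + t \<and> Al!(g-1) * t \<le> Bl!(g-1) * ((k-2*n-1) div h) + Cl!(g-1)"
  proof -
    fix k assume k: "2*n < k" "k \<le> m"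
    show "\<exists>t. N k \<le> 2 + t \<and> Al!(g-1) * t \<le> Bl!(g-1) * ((k-2*n-1) div h) + Cl!(g-1)"
      using tail_count[OF n i k] cnt_bound[OF g18, of "(k-2*n-1) div h"] unfolding N_def g_def by blast
  qed
  have gen: "\<forall>k\<in>{1..m}. real (N k) \<le> F \<alpha> \<beta> \<gamma> n k"
    if pos: "0 \<le> \<alpha>" "0 \<le> \<beta>" "0 \<le> \<gamma>" "\<alpha>+\<beta>+\<gamma> = 1"
     and R1: "i < n \<Longrightarrow> 1 \<le> 8/5 * (\<alpha> * x + \<beta>)"
     and R2: "2 \<le> 8/5 * (\<alpha> * (2 - x) + \<beta> + 2*\<gamma>)"
     and T1: "\<alpha> * real (Al!(g-1)) = 5 * real (Bl!(g-1))" "0 < Al!(g-1)"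
     and T2: "real (Cl!(g-1)) + 2 * real (Al!(g-1)) \<le> real (Al!(g-1)) * (8/5) * (2*\<alpha> + \<beta> + 2*\<gamma>)"
    for \<alpha> \<beta> \<gamma>
  proof
    fix k assume k: "k \<in> {1..m}"
    show "real (N k) \<le> F \<alpha> \<beta> \<gamma> n k"
      by (rule cert[OF n i m pos R1[unfolded x_def] R2[unfolded x_def] T1 T2 Nr Nt k])
  qed
  have "\<exists>\<alpha> \<beta> \<gamma>. 0 \<le> \<alpha> \<and> 0 \<le> \<beta> \<and> 0 \<le> \<gamma> \<and> \<alpha>+\<beta>+\<gamma> = 1 \<and> (\<forall>k\<in>{1..m}. real (N k) \<le> F \<alpha> \<beta> \<gamma> n k)"
  proof -
    have "g = 1 \<or> g = 2 \<or> g = 3 \<or> g = 4 \<or> g = 5 \<or> g = 6 \<or> g = 7 \<or> g = 8" using g18 by auto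
    then show ?thesis
    proof (elim disjE)
      assume g: "g = 1"
      have "\<forall>k\<in>{1..m}. real (N k) \<le> F (3/8) (5/8) 0 n k"
        by (rule gen) (use xl xu g in \<open>simp_all add: Al_def Bl_def Cl_def field_simps\<close>)
      then show ?thesis by (intro exI[of _ "3/8"] exI[of _ "5/8"] exI[of _ 0]) simp
    next
      assume g: "g = 2"
      have "\<forall>k\<in>{1..m}. real (N k) \<le> F (3/7) (4/7) 0 n k"
        by (rule gen) (use xl xu g in \<open>simp_all add: Al_def Bl_def Cl_def field_simps\<close>)
      then show ?thesis by (intro exI[of _ "3/7"] exI[of _ "4/7"] exI[of _ 0]) simp
    next
      assume g: "g = 3"
      have "\<forall>k\<in>{1..m}. real (N k) \<le> F (1/2) (1/2) 0 n k"
        by (rule gen) (use xl xu g in \<open>simp_all add: Al_def Bl_def Cl_def field_simps\<close>)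
      then show ?thesis by (intro exI[of _ "1/2"] exI[of _ "1/2"] exI[of _ 0]) simp
    next
      assume g: "g = 4"
      have "\<forall>k\<in>{1..m}. real (N k) \<le> F (3/5) (2/5) 0 n k"
        by (rule gen) (use xl xu g in \<open>simp_all add: Al_def Bl_def Cl_def field_simps\<close>)
      then show ?thesis by (intro exI[of _ "3/5"] exI[of _ "2/5"] exI[of _ 0]) simp
    next
      assume g: "g = 5"
      have "\<forall>k\<in>{1..m}. real (N k) \<le> F (3/4) (1/4) 0 n k"
        by (rule gen) (use xl xu g in \<open>simp_all add: Al_def Bl_def Cl_def field_simps\<close>)
      then show ?thesis by (intro exI[of _ "3/4"] exI[of _ "1/4"] exI[of _ 0]) simp
    next
      assume g: "g = 6"
      have "\<forall>k\<in>{1..m}. real (N k) \<le> F 1 0 0 n k"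
        by (rule gen) (use xl xu g in \<open>simp_all add: Al_def Bl_def Cl_def field_simps\<close>)
      then show ?thesis by (intro exI[of _ 1] exI[of _ 0] exI[of _ 0]) simp
    next
      assume g: "g = 7"
      have "\<forall>k\<in>{1..m}. real (N k) \<le> F (6/7) 0 (1/7) n k"
        by (rule gen) (use xl xu g in \<open>simp_all add: Al_def Bl_def Cl_def field_simps\<close>)
      then show ?thesis by (intro exI[of _ "6/7"] exI[of _ 0] exI[of _ "1/7"]) simp
    next
      assume g: "g = 8"
      have "\<forall>k\<in>{1..m}. real (N k) \<le> F (3/4) 0 (1/4) n k"
        by (rule gen) (use xl xu g in \<open>simp_all add: Al_def Bl_def Cl_def field_simps\<close>)
      then show ?thesis by (intro exI[of _ "3/4"] exI[of _ 0] exI[of _ "1/4"]) simp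
    qed
  qed
  then show ?thesis unfolding N_def .
qed

theorem lemma6:
  fixes n :: nat
  assumes "0 < n" and "8 dvd n"
  shows "rhat n \<le> ereal (8 / 5)"
proof -
  obtain h where n: "n = 8*h" using assms(2) by (auto elim: dvdE)
  have h: "0 < h" using assms(1) n by simp
  have n2: "2 \<le> n" using n h by simp
  have main: "ratio n m (sched n m) \<le> ereal (8/5)" if m: "2*n \<le> m" for m
    unfolding ratio_def
  proof (intro SUP_least)
    fix i c assume i: "i \<in> {1..n}" and c: "c \<in> costs m"
    obtain \<alpha> \<beta> \<gamma> where pos: "0 \<le> \<alpha>" "0 \<le> \<beta>" "0 \<le> \<gamma>" "\<alpha>+\<beta>+\<gamma> = 1"
      and bnd: "\<forall>k\<in>{1..m}. real (card {r\<in>{1..k}. sched n m r = i}) \<le> F \<alpha> \<beta> \<gamma> n k"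
      using agent[OF n h i m] by blast
    have mono: "\<forall>r\<in>{1..m}. \<forall>s\<in>{1..m}. r \<le> s \<longrightarrow> c s \<le> c r" and nn: "\<forall>r\<in>{1..m}. 0 \<le> c r"
      using c by (auto simp: costs_def)
    define u where "u r = (if sched n m r = i then 1 else 0::real)" for r
    have pre: "(\<Sum>r\<in>{1..k}. u r) \<le> (\<Sum>r\<in>{1..k}. vv \<alpha> \<beta> \<gamma> n r)" if k: "k \<le> m" for k
    proof (cases "k = 0")
      case True then show ?thesis by simp
    next
      case False
      have "(\<Sum>r\<in>{1..k}. u r) = (\<Sum>r\<in>{r\<in>{1..k}. sched n m r = i}. 1)"
        unfolding u_def by (rule sum.inter_filter[symmetric]) simp
      also have "\<dots> = real (card {r\<in>{1..k}. sched n m r = i})" by simp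
      also have "\<dots> \<le> F \<alpha> \<beta> \<gamma> n k" using bnd k False by auto
      also have "\<dots> = (\<Sum>r\<in>{1..k}. vv \<alpha> \<beta> \<gamma> n r)" using vv_sum[OF n2, of k] False by simp
      finally show ?thesis .
    qed
    have "(\<Sum>r\<in>alloc m (sched n m) i. c r) = (\<Sum>r\<in>{1..m}. if sched n m r = i then c r else 0)"
      unfolding alloc_def by (rule sum.inter_filter) simp
    also have "\<dots> = (\<Sum>r\<in>{1..m}. c r * u r)" unfolding u_def by (rule sum.cong) auto
    also have "\<dots> \<le> (\<Sum>r\<in>{1..m}. c r * vv \<alpha> \<beta> \<gamma> n r)" by (rule abel[OF mono nn pre])
    also have "\<dots> = 8/5 * (\<alpha> * ((\<Sum>r\<in>{1..m}. c r) / real n) + \<beta> * c 1 + \<gamma> * (c n + c (n+1)))"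
      by (rule vv_csum) (use n2 m in auto)
    also have "\<dots> \<le> 8/5 * CS n m c"
    proof -
      have cz1: "cz m c 1 = c 1" using n2 m by (simp add: cz_def)
      have czn: "cz m c n = c n" "cz m c (n+1) = c (n+1)" using n2 m by (auto simp: cz_def)
      have a: "(\<Sum>r\<in>{1..m}. c r) / real n \<le> CS n m c" unfolding CS_def by simp
      have b: "c 1 \<le> CS n m c" unfolding CS_def cz1[symmetric] by simp
      have d: "c n + c (n+1) \<le> CS n m c" unfolding CS_def czn[symmetric] by simp
      have "\<alpha> * ((\<Sum>r\<in>{1..m}. c r) / real n) \<le> \<alpha> * CS n m c" using a pos(1) by (rule mult_left_mono)
      moreover have "\<beta> * c 1 \<le> \<beta> * CS n m c" using b pos(2) by (rule mult_left_mono)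
      moreover have "\<gamma> * (c n + c (n+1)) \<le> \<gamma> * CS n m c" using d pos(3) by (rule mult_left_mono)
      moreover have "\<alpha> * CS n m c + \<beta> * CS n m c + \<gamma> * CS n m c = CS n m c"
        using pos(4) by (simp add: distrib_right[symmetric])
      ultimately have "\<alpha> * ((\<Sum>r\<in>{1..m}. c r) / real n) + \<beta> * c 1 + \<gamma> * (c n + c (n+1)) \<le> CS n m c"
        by linarith
      then show ?thesis by simp
    qed
    finally have S: "(\<Sum>r\<in>alloc m (sched n m) i. c r) \<le> 8/5 * CS n m c" .
    have CS0: "0 \<le> CS n m c"
    proof -
      have "cz m c 1 = c 1" using n2 m by (simp add: cz_def)
      moreover have "0 \<le> c 1" using nn n2 m by auto
      moreover have "cz m c 1 \<le> CS n m c" unfolding CS_def by simp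
      ultimately show ?thesis by linarith
    qed
    show "ereal ((\<Sum>r\<in>alloc m (sched n m) i. c r) / CS n m c) \<le> ereal (8/5)"
    proof (cases "CS n m c = 0")
      case True then show ?thesis by simp
    next
      case False
      then have "0 < CS n m c" using CS0 by simp
      then have "(\<Sum>r\<in>alloc m (sched n m) i. c r) / CS n m c \<le> 8/5" using S by (simp add: divide_le_eq)
      then show ?thesis by simp
    qed
  qed
  show ?thesis unfolding rhat_def rhat_nm_def
  proof (rule SUP_least)
    fix m assume "m \<in> {2*n..}"
    then have m: "2*n \<le> m" by simp
    show "(INF S\<in>ridge n m. ratio n m S) \<le> ereal (8/5)"
      using INF_lower[OF sched_ridge[OF assms(1) assms(2) m], of "ratio n m"] main[OF m] by (rule order_trans)
  qed
qed

end
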